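(* Let $p$ be a prime and $G=\mathbb{S}_p$ or $\mathbb{A}_p$. If $\mathcal{C}$ is a conjugacy class of elements of order $p$ in $G$, then $K_{\mathcal{C}}$ is irreducible.
   Context: For a finite group $G$ and a subset $\mathcal{C}\subseteq G\setminus\{1\}$ closed under conjugation, the Killing form $K_{\mathcal{C}}$ is the bilinear form on the complex vector space with basis $\mathcal{C}$ given on basis elements by $K_{\mathcal{C}}(a,b)=|C_G(ab)\cap\mathcal{C}|$. $K_{\mathcal{C}}$ is irreducible if the graph with vertex set $\mathcal{C}$, in which distinct $a,b$ are adjacent iff $C_G(ab)\cap\mathcal{C}\neq\emptyset$, is connected, and reducible otherwise. *)

theory Defs
  imports "HOL-Computational_Algebra.Primes" "HOL-Algebra.Sym_Groups" "HOL-Algebra.Multiplicative_Group"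
begin

definition conj_class :: "('a, 'b) monoid_scheme \<Rightarrow> 'a \<Rightarrow> 'a set" where
  "conj_class G x = {g \<otimes>\<^bsub>G\<^esub> x \<otimes>\<^bsub>G\<^esub> inv\<^bsub>G\<^esub> g | g. g \<in> carrier G}"

definition centralizer_elt :: "('a, 'b) monoid_scheme \<Rightarrow> 'a \<Rightarrow> 'a set" where
  "centralizer_elt G y = {g \<in> carrier G. g \<otimes>\<^bsub>G\<^esub> y = y \<otimes>\<^bsub>G\<^esub> g}"

definition killing_graph_edges :: "('a, 'b) monoid_scheme \<Rightarrow> 'a set \<Rightarrow> ('a \<times> 'a) set" where
  "killing_graph_edges G C =
     {(a, b). a \<in> C \<and> b \<in> C \<and> a \<noteq> b \<and> centralizer_elt G (a \<otimes>\<^bsub>G\<^esub> b) \<inter> C \<noteq> {}}"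

text \<open>K_C is irreducible iff that graph (vertex set C) is connected.\<close>
definition killing_irreducible :: "('a, 'b) monoid_scheme \<Rightarrow> 'a set \<Rightarrow> bool" where
  "killing_irreducible G C \<longleftrightarrow>
     (\<forall>a\<in>C. \<forall>b\<in>C. (a, b) \<in> (killing_graph_edges G C)\<^sup>*)"

end

theory Submission
  imports Defs
begin

context group
begin

lemma inv_cancel_left[simp]: "a \<in> carrier G \<Longrightarrow> z \<in> carrier G \<Longrightarrow> inv a \<otimes> (a \<otimes> z) = z"
  by (simp add: m_assoc[symmetric])
lemma inv_cancel_left'[simp]: "a \<in> carrier G \<Longrightarrow> z \<in> carrier G \<Longrightarrow> a \<otimes> (inv a \<otimes> z) = z"
  by (simp add: m_assoc[symmetric])

abbreviation "KR C \<equiv> (killing_graph_edges G C)\<^sup>*"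

lemma conj_class_closed:
  assumes "x \<in> carrier G" "g \<in> carrier G" "y \<in> conj_class G x"
  shows "g \<otimes> y \<otimes> inv g \<in> conj_class G x"
proof -
  obtain h where h: "h \<in> carrier G" "y = h \<otimes> x \<otimes> inv h"
    using assms(3) unfolding conj_class_def by blast
  have "g \<otimes> y \<otimes> inv g = (g \<otimes> h) \<otimes> x \<otimes> inv (g \<otimes> h)"
    using h assms by (simp add: inv_mult_group m_assoc)
  thus ?thesis unfolding conj_class_def using h assms by blast
qed

lemma conj_class_sub: "x \<in> carrier G \<Longrightarrow> conj_class G x \<subseteq> carrier G"
  unfolding conj_class_def by auto

lemma self_in_conj_class: "x \<in> carrier G \<Longrightarrow> x \<in> conj_class G x"
  unfolding conj_class_def by (rule CollectI, rule exI[of _ \<one>]) auto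

lemma edge_conj:
  assumes x: "x \<in> carrier G" and g: "g \<in> carrier G"
    and e: "(a, b) \<in> killing_graph_edges G (conj_class G x)"
  shows "(g \<otimes> a \<otimes> inv g, g \<otimes> b \<otimes> inv g) \<in> killing_graph_edges G (conj_class G x)"
proof -
  let ?C = "conj_class G x"
  from e have a: "a \<in> ?C" and b: "b \<in> ?C" and ab: "a \<noteq> b"
    and "centralizer_elt G (a \<otimes> b) \<inter> ?C \<noteq> {}"
    unfolding killing_graph_edges_def by auto
  then obtain c where c: "c \<in> ?C" "c \<in> carrier G" "c \<otimes> (a \<otimes> b) = (a \<otimes> b) \<otimes> c"
    unfolding centralizer_elt_def by auto
  have ac: "a \<in> carrier G" "b \<in> carrier G" using a b conj_class_sub[OF x] by auto
  have 1: "g \<otimes> a \<otimes> inv g \<in> ?C" "g \<otimes> b \<otimes> inv g \<in> ?C" "g \<otimes> c \<otimes> inv g \<in> ?C"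
    using conj_class_closed[OF x g] a b c by auto
  have 2: "g \<otimes> a \<otimes> inv g \<noteq> g \<otimes> b \<otimes> inv g"
    using ab ac g by simp
  have prod: "(g \<otimes> a \<otimes> inv g) \<otimes> (g \<otimes> b \<otimes> inv g) = g \<otimes> (a \<otimes> b) \<otimes> inv g"
    using ac g by (simp add: m_assoc[symmetric]) (simp add: m_assoc)
  have "(g \<otimes> c \<otimes> inv g) \<otimes> (g \<otimes> (a \<otimes> b) \<otimes> inv g) = g \<otimes> (c \<otimes> (a \<otimes> b)) \<otimes> inv g"
    using ac g c by (simp add: m_assoc[symmetric]) (simp add: m_assoc)
  also have "\<dots> = g \<otimes> ((a \<otimes> b) \<otimes> c) \<otimes> inv g" using c by simp
  also have "\<dots> = (g \<otimes> (a \<otimes> b) \<otimes> inv g) \<otimes> (g \<otimes> c \<otimes> inv g)"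
    using ac g c by (simp add: m_assoc[symmetric]) (simp add: m_assoc)
  finally have 3: "g \<otimes> c \<otimes> inv g \<in> centralizer_elt G ((g \<otimes> a \<otimes> inv g) \<otimes> (g \<otimes> b \<otimes> inv g))"
    unfolding centralizer_elt_def prod using ac g c by auto
  show ?thesis unfolding killing_graph_edges_def using 1 2 3 by blast
qed

lemma edge_sym:
  assumes x: "x \<in> carrier G"
    and e: "(a, b) \<in> killing_graph_edges G (conj_class G x)"
  shows "(b, a) \<in> killing_graph_edges G (conj_class G x)"
proof -
  let ?C = "conj_class G x"
  from e have a: "a \<in> ?C" and b: "b \<in> ?C" and ab: "a \<noteq> b"
    and "centralizer_elt G (a \<otimes> b) \<inter> ?C \<noteq> {}"
    unfolding killing_graph_edges_def by auto
  then obtain c where c: "c \<in> ?C" "c \<in> carrier G" "c \<otimes> (a \<otimes> b) = (a \<otimes> b) \<otimes> c"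
    unfolding centralizer_elt_def by auto
  have ac: "a \<in> carrier G" "b \<in> carrier G" using a b conj_class_sub[OF x] by auto
  have 1: "inv a \<otimes> c \<otimes> a \<in> ?C"
    using conj_class_closed[OF x inv_closed[OF ac(1)] c(1)] ac by simp
  have "(inv a \<otimes> c \<otimes> a) \<otimes> (b \<otimes> a) = inv a \<otimes> (c \<otimes> (a \<otimes> b)) \<otimes> a"
    using ac c(2) by (simp add: m_assoc)
  also have "\<dots> = inv a \<otimes> ((a \<otimes> b) \<otimes> c) \<otimes> a" using c by simp
  also have "\<dots> = (b \<otimes> a) \<otimes> (inv a \<otimes> c \<otimes> a)"
    using ac c(2) by (simp add: m_assoc)
  finally have "inv a \<otimes> c \<otimes> a \<in> centralizer_elt G (b \<otimes> a)"
    unfolding centralizer_elt_def using ac c by auto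
  thus ?thesis unfolding killing_graph_edges_def using 1 a b ab ac by auto
qed

lemma KR_conj:
  assumes x: "x \<in> carrier G" and g: "g \<in> carrier G"
    and r: "(a, b) \<in> KR (conj_class G x)"
  shows "(g \<otimes> a \<otimes> inv g, g \<otimes> b \<otimes> inv g) \<in> KR (conj_class G x)"
  using r
proof (induction rule: rtrancl_induct)
  case base thus ?case by simp
next
  case (step y z)
  thus ?case using edge_conj[OF x g step(2)] by (meson rtrancl.simps)
qed

lemma KR_sym:
  assumes x: "x \<in> carrier G" and r: "(a, b) \<in> KR (conj_class G x)"
  shows "(b, a) \<in> KR (conj_class G x)"
  using r
proof (induction rule: rtrancl_induct)
  case base thus ?case by simp
next
  case (step y z)
  thus ?case using edge_sym[OF x step(2)] by (meson converse_rtrancl_into_rtrancl)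
qed

definition Hst :: "'a \<Rightarrow> 'a set" where
  "Hst x = {g \<in> carrier G. (x, g \<otimes> x \<otimes> inv g) \<in> KR (conj_class G x)}"

lemma Hst_one: "x \<in> carrier G \<Longrightarrow> \<one> \<in> Hst x"
  unfolding Hst_def by simp

lemma Hst_mult:
  assumes x: "x \<in> carrier G" and g: "g \<in> Hst x" and h: "h \<in> Hst x"
  shows "g \<otimes> h \<in> Hst x"
proof -
  have gc: "g \<in> carrier G" and hc: "h \<in> carrier G" using g h unfolding Hst_def by auto
  have 1: "(x, g \<otimes> x \<otimes> inv g) \<in> KR (conj_class G x)" using g unfolding Hst_def by auto
  have "(g \<otimes> x \<otimes> inv g, g \<otimes> (h \<otimes> x \<otimes> inv h) \<otimes> inv g) \<in> KR (conj_class G x)"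
    using KR_conj[OF x gc] h unfolding Hst_def by auto
  moreover have "g \<otimes> (h \<otimes> x \<otimes> inv h) \<otimes> inv g = (g \<otimes> h) \<otimes> x \<otimes> inv (g \<otimes> h)"
    using gc hc x by (simp add: inv_mult_group m_assoc)
  ultimately show ?thesis using 1 gc hc unfolding Hst_def by auto
qed

lemma Hst_inv:
  assumes x: "x \<in> carrier G" and g: "g \<in> Hst x"
  shows "inv g \<in> Hst x"
proof -
  have gc: "g \<in> carrier G" using g unfolding Hst_def by auto
  have "(inv g \<otimes> x \<otimes> inv (inv g), inv g \<otimes> (g \<otimes> x \<otimes> inv g) \<otimes> inv (inv g)) \<in> KR (conj_class G x)"
    using KR_conj[OF x inv_closed[OF gc]] g unfolding Hst_def by auto
  moreover have "inv g \<otimes> (g \<otimes> x \<otimes> inv g) \<otimes> inv (inv g) = x"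
    using gc x by (simp add: m_assoc[symmetric]) (simp add: m_assoc)
  ultimately show ?thesis using KR_sym[OF x] gc unfolding Hst_def by auto
qed

lemma Hst_all:
  assumes x: "x \<in> carrier G" and H: "carrier G \<subseteq> Hst x"
  shows "killing_irreducible G (conj_class G x)"
  unfolding killing_irreducible_def
proof (intro ballI)
  fix a b assume a: "a \<in> conj_class G x" and b: "b \<in> conj_class G x"
  obtain g where g: "g \<in> carrier G" "a = g \<otimes> x \<otimes> inv g" using a unfolding conj_class_def by blast
  obtain h where h: "h \<in> carrier G" "b = h \<otimes> x \<otimes> inv h" using b unfolding conj_class_def by blast
  have "(x, a) \<in> KR (conj_class G x)" using H g unfolding Hst_def by auto
  hence "(a, x) \<in> KR (conj_class G x)" using KR_sym[OF x] by blast
  moreover have "(x, b) \<in> KR (conj_class G x)" using H h unfolding Hst_def by auto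
  ultimately show "(a, b) \<in> KR (conj_class G x)" by simp
qed

lemma Hst_direct:
  assumes x: "x \<in> carrier G" and k: "k \<in> carrier G" and c: "c \<in> conj_class G x"
    and comm: "c \<otimes> (x \<otimes> (k \<otimes> x \<otimes> inv k)) = (x \<otimes> (k \<otimes> x \<otimes> inv k)) \<otimes> c"
  shows "k \<in> Hst x"
proof (cases "x = k \<otimes> x \<otimes> inv k")
  case True thus ?thesis unfolding Hst_def using k by (simp add: True[symmetric])
next
  case False
  have "c \<in> carrier G" using c conj_class_sub[OF x] by auto
  hence "(x, k \<otimes> x \<otimes> inv k) \<in> killing_graph_edges G (conj_class G x)"
    unfolding killing_graph_edges_def centralizer_elt_def
    using False comm c self_in_conj_class[OF x] conj_class_closed[OF x k self_in_conj_class[OF x]]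
    by auto
  thus ?thesis unfolding Hst_def using k by auto
qed

end


context group
begin

lemma transport_irreducible:
  assumes y: "y \<in> carrier G" and hom: "\<phi> \<in> hom G G"
    and bij: "bij_betw \<phi> (carrier G) (carrier G)"
    and irr: "killing_irreducible G (conj_class G y)"
  shows "killing_irreducible G (conj_class G (\<phi> y))"
proof -
  interpret h: group_hom G G \<phi>
    by (rule group_hom.intro[OF is_group is_group]) (simp add: group_hom_axioms_def hom)
  have inj: "inj_on \<phi> (carrier G)" and surj: "\<phi> ` carrier G = carrier G"
    using bij by (auto simp: bij_betw_def)
  have cc: "conj_class G (\<phi> y) = \<phi> ` conj_class G y"
  proof
    show "conj_class G (\<phi> y) \<subseteq> \<phi> ` conj_class G y"
    proof
      fix z assume "z \<in> conj_class G (\<phi> y)"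
      then obtain g where g: "g \<in> carrier G" "z = g \<otimes> \<phi> y \<otimes> inv g"
        unfolding conj_class_def by blast
      obtain h where h: "h \<in> carrier G" "g = \<phi> h" using g(1) surj by blast
      have "z = \<phi> (h \<otimes> y \<otimes> inv h)" using g h y by simp
      moreover have "h \<otimes> y \<otimes> inv h \<in> conj_class G y" unfolding conj_class_def using h by blast
      ultimately show "z \<in> \<phi> ` conj_class G y" by blast
    qed
  next
    show "\<phi> ` conj_class G y \<subseteq> conj_class G (\<phi> y)"
    proof
      fix z assume "z \<in> \<phi> ` conj_class G y"
      then obtain h where h: "h \<in> carrier G" "z = \<phi> (h \<otimes> y \<otimes> inv h)"
        unfolding conj_class_def by blast
      have "z = \<phi> h \<otimes> \<phi> y \<otimes> inv (\<phi> h)" using h y by simp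
      thus "z \<in> conj_class G (\<phi> y)" unfolding conj_class_def using h h.hom_closed[OF h(1)] by blast
    qed
  qed
  have edge: "(\<phi> a, \<phi> b) \<in> killing_graph_edges G (\<phi> ` conj_class G y)"
    if e: "(a, b) \<in> killing_graph_edges G (conj_class G y)" for a b
  proof -
    from e have a: "a \<in> conj_class G y" and b: "b \<in> conj_class G y" and ab: "a \<noteq> b"
      and "centralizer_elt G (a \<otimes> b) \<inter> conj_class G y \<noteq> {}"
      unfolding killing_graph_edges_def by auto
    then obtain c where c: "c \<in> conj_class G y" "c \<in> carrier G" "c \<otimes> (a \<otimes> b) = (a \<otimes> b) \<otimes> c"
      unfolding centralizer_elt_def by auto
    have ac: "a \<in> carrier G" "b \<in> carrier G" using a b conj_class_sub[OF y] by auto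
    have "\<phi> a \<noteq> \<phi> b" using ab ac inj by (meson inj_on_contraD)
    moreover have "\<phi> c \<otimes> (\<phi> a \<otimes> \<phi> b) = (\<phi> a \<otimes> \<phi> b) \<otimes> \<phi> c"
      using c ac by (metis h.hom_mult m_closed)
    moreover have "\<phi> c \<in> carrier G" using c by simp
    moreover have "\<phi> c \<in> \<phi> ` conj_class G y" using c by blast
    ultimately show ?thesis unfolding killing_graph_edges_def centralizer_elt_def
      using a b by blast
  qed
  show ?thesis unfolding killing_irreducible_def cc
  proof (intro ballI)
    fix a' b' assume "a' \<in> \<phi> ` conj_class G y" "b' \<in> \<phi> ` conj_class G y"
    then obtain a b where ab: "a \<in> conj_class G y" "b \<in> conj_class G y" "a' = \<phi> a" "b' = \<phi> b" by blast
    have "(a, b) \<in> KR (conj_class G y)" using irr ab unfolding killing_irreducible_def by blast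
    thus "(a', b') \<in> KR (\<phi> ` conj_class G y)" unfolding ab(3,4)
    proof (induction rule: rtrancl_induct)
      case base thus ?case by simp
    next
      case (step u v) thus ?case using edge[OF step(2)] by (meson rtrancl.simps)
    qed
  qed
qed

end


definition scyc :: "nat \<Rightarrow> nat \<Rightarrow> nat" where
  "scyc p i = (if 1 \<le> i \<and> i < p then Suc i else if i = p \<and> 1 \<le> p then 1 else i)"

lemma scyc_permutes: "scyc p permutes {1..p}"
proof -
  have "inj_on (scyc p) {1..p}"
    unfolding inj_on_def scyc_def by auto
  moreover have "scyc p ` {1..p} \<subseteq> {1..p}" unfolding scyc_def by auto
  ultimately have "bij_betw (scyc p) {1..p} {1..p}"
    by (simp add: bij_betw_def endo_inj_surj)
  thus ?thesis by (rule bij_imp_permutes) (auto simp: scyc_def)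
qed

lemma sym_pow: "pow (sym_group n) x (k::nat) = x ^^ k"
  by (induction k) (simp_all add: sym_group_def funpow_Suc_right del: funpow.simps)

lemma alt_pow: "pow (alt_group n) x (k::nat) = x ^^ k"
  by (induction k) (simp_all add: alt_group_def sym_group_def funpow_Suc_right del: funpow.simps)

lemma relabel:
  assumes p: "prime p" and x: "x permutes {1..p}" and xp: "x ^^ p = id" and xid: "x \<noteq> id"
  shows "\<exists>\<sigma>. \<sigma> permutes {1..p} \<and> x = \<sigma> \<circ> scyc p \<circ> inv' \<sigma>"
proof -
  obtain a where a: "x a \<noteq> a" using xid by (auto simp: fun_eq_iff)
  have aS: "a \<in> {1..p}" using a x by (meson permutes_not_in)
  have perm: "permutation x" using x by (meson finite_atLeastAtMost permutation_permutes)
  have "least_power x a dvd p" using least_power_dvd[OF perm] xp by simp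
  moreover have "least_power x a > 1" using least_power_gt_one[OF perm a] by simp
  ultimately have d: "least_power x a = p" using p unfolding prime_nat_iff by (metis less_irrefl)
  have pow_perm: "(x ^^ n) permutes {1..p}" for n using permutes_funpow[OF x] .
  have dist: "(x ^^ i) a \<noteq> (x ^^ j) a" if "i < j" "j < p" for i j
  proof
    assume eq: "(x ^^ i) a = (x ^^ j) a"
    have "(x ^^ j) a = (x ^^ i) ((x ^^ (j - i)) a)"
      using that by (metis funpow_add le_add_diff_inverse less_imp_le o_apply)
    hence "(x ^^ i) ((x ^^ (j - i)) a) = (x ^^ i) a" using eq by simp
    hence "(x ^^ (j - i)) a = a" using permutes_inj[OF pow_perm[of i]] by (meson injD)
    hence "p dvd (j - i)" using least_power_dvd[OF perm] d by metis
    thus False using that by (simp add: nat_dvd_not_less)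
  qed
  define \<sigma> where "\<sigma> i = (if i \<in> {1..p} then (x ^^ (i - 1)) a else i)" for i
  have inj: "inj_on \<sigma> {1..p}"
  proof (rule inj_onI)
    fix i j assume ij: "i \<in> {1..p}" "j \<in> {1..p}" "\<sigma> i = \<sigma> j"
    show "i = j"
    proof (rule ccontr)
      assume "i \<noteq> j"
      hence "i - 1 < j - 1 \<or> j - 1 < i - 1" using ij by auto
      thus False using dist ij unfolding \<sigma>_def by (metis atLeastAtMost_iff diff_less less_le_trans zero_less_one)
    qed
  qed
  have img: "\<sigma> ` {1..p} \<subseteq> {1..p}"
    unfolding \<sigma>_def using permutes_in_image[OF pow_perm] aS by auto
  have sp: "\<sigma> permutes {1..p}"
  proof (rule bij_imp_permutes)
    show "bij_betw \<sigma> {1..p} {1..p}" using inj img endo_inj_surj[OF _ img inj] by (simp add: bij_betw_def)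
  qed (auto simp: \<sigma>_def)
  have comm: "x \<circ> \<sigma> = \<sigma> \<circ> scyc p"
  proof
    fix i
    show "(x \<circ> \<sigma>) i = (\<sigma> \<circ> scyc p) i"
    proof (cases "i \<in> {1..p}")
      case False
      thus ?thesis using x unfolding \<sigma>_def scyc_def by (auto simp: permutes_not_in)
    next
      case True
      show ?thesis
      proof (cases "i = p")
        case True
        have "(x ^^ p) a = a" using xp by simp
        moreover have "p = Suc (p - 1)" using p prime_gt_0_nat by simp
        ultimately have "x ((x ^^ (p - 1)) a) = a" by (metis funpow.simps(2) o_apply)
        thus ?thesis using True prime_gt_1_nat[OF p] unfolding \<sigma>_def scyc_def by auto
      next
        case False
        hence "1 \<le> i" "i < p" using True by auto
        moreover have "x ((x ^^ (i - 1)) a) = (x ^^ i) a"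
          using \<open>1 \<le> i\<close> by (metis Suc_diff_1 funpow.simps(2) less_le_trans o_apply zero_less_one)
        ultimately show ?thesis unfolding \<sigma>_def scyc_def by auto
      qed
    qed
  qed
  have "x = x \<circ> (\<sigma> \<circ> inv' \<sigma>)" using permutes_inv_o[OF sp] by simp
  also have "\<dots> = \<sigma> \<circ> scyc p \<circ> inv' \<sigma>" using comm by (metis comp_assoc)
  finally show ?thesis using sp by blast
qed


lemma cyc2_apply: "distinct [a,b] \<Longrightarrow> cycle_of_list [a,b] z = (if z = a then b else if z = b then a else z)"
  by (auto simp: transpose_def)
lemma cyc3_apply: "distinct [a,b,c] \<Longrightarrow> cycle_of_list [a,b,c] z = (if z = a then b else if z = b then c else if z = c then a else z)"
  by (auto simp: transpose_def)
lemma cyc4_apply: "distinct [a,b,c,d] \<Longrightarrow> cycle_of_list [a,b,c,d] z = (if z = a then b else if z = b then c else if z = c then d else if z = d then a else z)"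
  by (auto simp: transpose_def)

lemmas cyc_apply = cyc2_apply cyc3_apply cyc4_apply

lemma fun_eq_window:
  fixes f g :: "nat \<Rightarrow> nat"
  assumes "f 0 = g 0" "f 1 = g 1" "f 2 = g 2" "f 3 = g 3" "f 4 = g 4" "f 5 = g 5" "f 6 = g 6"
    "f 7 = g 7" "f 8 = g 8" "\<And>q. p = Suc q \<Longrightarrow> f q = g q" "f p = g p"
    "\<And>z. 8 < z \<Longrightarrow> Suc z < p \<Longrightarrow> f z = g z" "\<And>z. p < z \<Longrightarrow> 8 < z \<Longrightarrow> f z = g z"
  shows "f = g"
proof
  fix z
  consider "z \<le> 8" | "8 < z \<and> Suc z < p" | "p = Suc z" | "z = p" | "p < z \<and> 8 < z" by linarith
  thus "f z = g z"
  proof cases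
    case 1
    hence "z = 0 \<or> z = 1 \<or> z = 2 \<or> z = 3 \<or> z = 4 \<or> z = 5 \<or> z = 6 \<or> z = 7 \<or> z = 8" by linarith
    thus ?thesis using assms(1-9) by (elim disjE) simp_all
  qed (use assms in auto)
qed


abbreviation "k1 \<equiv> cycle_of_list [4,6,1] \<circ> cycle_of_list [5,7,2::nat]"
abbreviation "u1 \<equiv> cycle_of_list [5,7,2::nat]"
abbreviation "v1 \<equiv> cycle_of_list [2,7,5::nat]"
abbreviation "k2 \<equiv> cycle_of_list [4,1,6,5] \<circ> cycle_of_list [7,2::nat]"
abbreviation "u2 \<equiv> cycle_of_list [2,7] \<circ> cycle_of_list [3,5::nat]"
abbreviation "k0 \<equiv> cycle_of_list [1,4,5,2::nat]"
abbreviation "u0 \<equiv> cycle_of_list [2,5] \<circ> cycle_of_list [3,4::nat]"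
abbreviation "k5 \<equiv> cycle_of_list [3,4,5::nat]"
abbreviation "u5 \<equiv> cycle_of_list [2,3] \<circ> cycle_of_list [4,5::nat]"

lemma I1: "p \<ge> 9 \<Longrightarrow> v1 \<circ> scyc p \<circ> k1 \<circ> scyc p = scyc p \<circ> scyc p \<circ> v1 \<circ> k1"
  by (rule fun_eq_window[where p=p]; simp add: scyc_def cyc_apply del: cycle_of_list.simps)
lemma I1_7: "v1 \<circ> scyc 7 \<circ> k1 \<circ> scyc 7 = scyc 7 \<circ> scyc 7 \<circ> v1 \<circ> k1"
  by (rule fun_eq_window[where p=7]; simp add: scyc_def cyc_apply del: cycle_of_list.simps)
lemma I2: "p \<ge> 9 \<Longrightarrow> u2 \<circ> scyc p \<circ> k2 \<circ> scyc p = scyc p \<circ> scyc p \<circ> u2 \<circ> k2"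
  by (rule fun_eq_window[where p=p]; simp add: scyc_def cyc_apply del: cycle_of_list.simps)
lemma I2_7: "u2 \<circ> scyc 7 \<circ> k2 \<circ> scyc 7 = scyc 7 \<circ> scyc 7 \<circ> u2 \<circ> k2"
  by (rule fun_eq_window[where p=7]; simp add: scyc_def cyc_apply del: cycle_of_list.simps)
lemma I4: "p \<ge> 9 \<Longrightarrow> u0 \<circ> scyc p \<circ> k0 \<circ> scyc p = scyc p \<circ> scyc p \<circ> u0 \<circ> k0"
  by (rule fun_eq_window[where p=p]; simp add: scyc_def cyc_apply del: cycle_of_list.simps)
lemma I4_7: "u0 \<circ> scyc 7 \<circ> k0 \<circ> scyc 7 = scyc 7 \<circ> scyc 7 \<circ> u0 \<circ> k0"
  by (rule fun_eq_window[where p=7]; simp add: scyc_def cyc_apply del: cycle_of_list.simps)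
lemma I4_5: "u0 \<circ> scyc 5 \<circ> k0 \<circ> scyc 5 = scyc 5 \<circ> scyc 5 \<circ> u0 \<circ> k0"
  by (rule fun_eq_window[where p=5]; simp add: scyc_def cyc_apply del: cycle_of_list.simps)
lemma I5: "u5 \<circ> scyc 5 \<circ> k5 \<circ> scyc 5 = scyc 5 \<circ> u5 \<circ> k5"
  by (rule fun_eq_window[where p=5]; simp add: scyc_def cyc_apply del: cycle_of_list.simps)
lemma I6: "id \<circ> scyc 3 \<circ> cycle_of_list [1,2] \<circ> scyc 3 = id \<circ> id \<circ> cycle_of_list [1,2]"
  by (rule fun_eq_window[where p=3]; simp add: scyc_def cyc_apply del: cycle_of_list.simps)
lemma I3: "k1 \<circ> k2 = cycle_of_list [5,6,7]"
  by (rule fun_eq_window[where p=9]; simp add: scyc_def cyc_apply del: cycle_of_list.simps)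
lemma V1: "v1 \<circ> u1 = id" by (rule fun_eq_window[where p=9]; simp add: scyc_def cyc_apply del: cycle_of_list.simps)
lemma V2: "u2 \<circ> u2 = id" by (rule fun_eq_window[where p=9]; simp add: scyc_def cyc_apply del: cycle_of_list.simps)
lemma V0: "u0 \<circ> u0 = id" by (rule fun_eq_window[where p=9]; simp add: scyc_def cyc_apply del: cycle_of_list.simps)
lemma V5: "u5 \<circ> u5 = id" by (rule fun_eq_window[where p=9]; simp add: scyc_def cyc_apply del: cycle_of_list.simps)
lemma S3: "scyc 3 = cycle_of_list [1,2,3]" by (rule fun_eq_window[where p=3]; simp add: scyc_def cyc_apply del: cycle_of_list.simps)
lemma S2: "scyc 2 = cycle_of_list [1,2]" by (rule fun_eq_window[where p=2]; simp add: scyc_def cyc_apply del: cycle_of_list.simps)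


lemma G_facts:
  assumes G: "G = sym_group p \<or> G = alt_group p"
  shows "group G" "mult G = (\<circ>)" "one G = id"
    "\<And>g. g \<in> carrier G \<Longrightarrow> inv\<^bsub>G\<^esub> g = inv' g"
    "\<And>g. g \<in> carrier G \<Longrightarrow> g permutes {1..p}"
    "\<And>g. g permutes {1..p} \<Longrightarrow> evenperm g \<Longrightarrow> g \<in> carrier G"
  using G sym_group_is_group alt_group_is_group sym_group_mult alt_group_mult sym_group_one alt_group_one
    sym_group_inv_equality alt_group_inv_equality sym_group_carrier alt_group_carrier
  by auto

lemma cyc_even: "distinct cs \<Longrightarrow> cs \<noteq> [] \<Longrightarrow> evenperm (cycle_of_list cs) \<longleftrightarrow> odd (length cs)"
proof (induction cs rule: cycle_of_list.induct)
  case (1 i j cs)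
  have "evenperm (cycle_of_list (i # j # cs)) = (evenperm (transpose i j) = evenperm (cycle_of_list (j # cs)))"
    by (simp add: evenperm_comp permutation_of_cycle permutation_swap_id)
  also have "\<dots> = (\<not> evenperm (cycle_of_list (j # cs)))" using 1(2) by (simp add: evenperm_swap)
  also have "\<dots> = odd (length (i # j # cs))" using 1 by simp
  finally show ?case .
qed auto

lemma cyc_permutes: "set cs \<subseteq> {1..p} \<Longrightarrow> cycle_of_list cs permutes {1..p}"
  using cycle_permutes permutes_subset by blast

lemma cyc3_in:
  assumes G: "G = sym_group p \<or> G = alt_group p" and "distinct [a,b,c]" "{a,b,c} \<subseteq> {1..p}"
  shows "cycle_of_list [a,b,c] \<in> carrier G"
  using G_facts(6)[OF G] cyc_permutes[of "[a,b,c]" p] cyc_even[of "[a,b,c]"] assms by auto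

lemma direct_perm:
  assumes G: "G = sym_group p \<or> G = alt_group p"
    and s: "s \<in> carrier G" and k: "k \<in> carrier G" and u: "u \<in> carrier G"
    and vu: "v \<circ> u = id" and eq: "v \<circ> s \<circ> k \<circ> s = w \<circ> v \<circ> k" and ws: "s \<circ> w = w \<circ> s"
  shows "k \<in> group.Hst G s"
proof -
  interpret group G using G_facts(1)[OF G] .
  have up: "u permutes {1..p}" and kp: "k permutes {1..p}" using G_facts(5)[OF G] u k by auto
  have uinv: "u \<circ> inv' u = id" "inv' u \<circ> u = id" using permutes_inv_o[OF up] by auto
  have kinv: "k \<circ> inv' k = id" using permutes_inv_o[OF kp] by auto
  have vdef: "v = inv' u"
  proof -
    have "v = v \<circ> (u \<circ> inv' u)" using uinv by simp
    also have "\<dots> = (v \<circ> u) \<circ> inv' u" by (simp add: comp_assoc)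
    finally show ?thesis using vu by simp
  qed
  have e1: "s \<circ> k \<circ> s = u \<circ> w \<circ> v \<circ> k"
  proof -
    have "s \<circ> k \<circ> s = (u \<circ> v) \<circ> (s \<circ> k \<circ> s)" using uinv vdef by simp
    also have "\<dots> = u \<circ> (v \<circ> s \<circ> k \<circ> s)" by (simp add: comp_assoc)
    also have "\<dots> = u \<circ> w \<circ> v \<circ> k" using eq by (simp add: comp_assoc)
    finally show ?thesis .
  qed
  have e2: "s \<circ> (k \<circ> s \<circ> inv' k) = u \<circ> w \<circ> v"
  proof -
    have "s \<circ> (k \<circ> s \<circ> inv' k) = (s \<circ> k \<circ> s) \<circ> inv' k" by (simp add: comp_assoc)
    also have "\<dots> = (u \<circ> w \<circ> v) \<circ> (k \<circ> inv' k)" using e1 by (simp add: comp_assoc)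
    finally show ?thesis using kinv by simp
  qed
  have c: "u \<circ> s \<circ> inv' u \<in> conj_class G s"
  proof -
    have "u \<circ> s \<circ> inv' u = u \<otimes>\<^bsub>G\<^esub> s \<otimes>\<^bsub>G\<^esub> inv\<^bsub>G\<^esub> u" using u G_facts(2,4)[OF G] by simp
    thus ?thesis unfolding conj_class_def using u by blast
  qed
  have vu': "v \<circ> (u \<circ> f) = f" for f using vu by (simp add: comp_assoc[symmetric])
  have comm: "(u \<circ> s \<circ> inv' u) \<circ> (u \<circ> w \<circ> v) = (u \<circ> w \<circ> v) \<circ> (u \<circ> s \<circ> inv' u)"
  proof -
    have "(u \<circ> s \<circ> inv' u) \<circ> (u \<circ> w \<circ> v) = u \<circ> (s \<circ> (v \<circ> (u \<circ> (w \<circ> v))))"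
      using vdef by (simp add: comp_assoc)
    also have "\<dots> = u \<circ> (s \<circ> w) \<circ> v" by (simp add: comp_assoc vu')
    also have "\<dots> = u \<circ> (w \<circ> s) \<circ> v" using ws by simp
    also have "\<dots> = u \<circ> (w \<circ> (v \<circ> (u \<circ> (s \<circ> v))))" by (simp add: comp_assoc vu')
    also have "\<dots> = (u \<circ> w \<circ> v) \<circ> (u \<circ> s \<circ> inv' u)" using vdef by (simp add: comp_assoc)
    finally show ?thesis .
  qed
  show ?thesis
  proof (rule Hst_direct[OF s k c])
    show "(u \<circ> s \<circ> inv' u) \<otimes>\<^bsub>G\<^esub> (s \<otimes>\<^bsub>G\<^esub> (k \<otimes>\<^bsub>G\<^esub> s \<otimes>\<^bsub>G\<^esub> inv\<^bsub>G\<^esub> k)) = s \<otimes>\<^bsub>G\<^esub> (k \<otimes>\<^bsub>G\<^esub> s \<otimes>\<^bsub>G\<^esub> inv\<^bsub>G\<^esub> k) \<otimes>\<^bsub>G\<^esub> (u \<circ> s \<circ> inv' u)"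
      using comm e2 G_facts(2,4)[OF G] k by simp
  qed
qed


declare cycle_of_list.simps [simp del]

lemma rot3: assumes "distinct [a,b,c]" shows "cycle_of_list [a,b,c] = cycle_of_list [b,c,a]"
proof
  fix z
  consider "z = a" | "z = b" | "z = c" | "z \<notin> {a,b,c}" by blast
  thus "cycle_of_list [a,b,c] z = cycle_of_list [b,c,a] z"
    using assms by cases (auto simp add: cyc3_apply simp del: cycle_of_list.simps)
qed
lemma sq3: assumes "distinct [a,b,c]" shows "cycle_of_list [a,b,c] \<circ> cycle_of_list [a,b,c] = cycle_of_list [a,c,b]"
proof
  fix z
  consider "z = a" | "z = b" | "z = c" | "z \<notin> {a,b,c}" by blast
  thus "(cycle_of_list [a,b,c] \<circ> cycle_of_list [a,b,c]) z = cycle_of_list [a,c,b] z"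
    using assms by cases (auto simp add: cyc3_apply simp del: cycle_of_list.simps)
qed
lemma P1: assumes "distinct [a,b,x,y]" shows "cycle_of_list [a,b,y] \<circ> cycle_of_list [a,x,b] = cycle_of_list [a,x,y]"
proof
  fix z
  consider "z = a" | "z = b" | "z = x" | "z = y" | "z \<notin> {a,b,x,y}" by blast
  thus "(cycle_of_list [a,b,y] \<circ> cycle_of_list [a,x,b]) z = cycle_of_list [a,x,y] z"
    using assms by cases (auto simp add: cyc3_apply simp del: cycle_of_list.simps)
qed
lemma P2: assumes "distinct [d,a,b,c]" shows "cycle_of_list [d,a,b] \<circ> cycle_of_list [d,b,c] = cycle_of_list [a,b,c]"
proof
  fix z
  consider "z = a" | "z = b" | "z = c" | "z = d" | "z \<notin> {a,b,c,d}" by blast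
  thus "(cycle_of_list [d,a,b] \<circ> cycle_of_list [d,b,c]) z = cycle_of_list [a,b,c] z"
    using assms by cases (auto simp add: cyc3_apply simp del: cycle_of_list.simps)
qed

lemma gen3:
  fixes H :: "(nat \<Rightarrow> nat) set"
  assumes Hm: "\<And>g h. g \<in> H \<Longrightarrow> h \<in> H \<Longrightarrow> g \<circ> h \<in> H"
    and Hc: "\<And>h cs. h \<in> H \<Longrightarrow> distinct cs \<Longrightarrow> cycle_of_list cs \<in> H \<Longrightarrow> cycle_of_list (map h cs) \<in> H"
    and c123: "cycle_of_list [1,2,3] \<in> H"
    and up: "\<And>i. 1 \<le> i \<Longrightarrow> i + 3 \<le> p \<Longrightarrow> cycle_of_list [i, i+1, i+2] \<in> H \<Longrightarrow> cycle_of_list [i+1, i+2, i+3] \<in> H"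
    and p4: "p \<noteq> 4"
    and abc: "distinct [a,b,c]" "{a,b,c} \<subseteq> {1..p}"
  shows "cycle_of_list [a,b,c] \<in> H"
proof -
  have tau: "cycle_of_list [j, j+1, j+2] \<in> H" if "1 \<le> j" "j + 2 \<le> p" for j
    using that
  proof (induction j rule: nat_induct_at_least)
    case base
    have "[1::nat, 1+1, 1+2] = [1,2,3]" by simp
    thus ?case using c123 by metis
  next
    case (Suc j)
    have "cycle_of_list [j+1, j+2, j+3] \<in> H" using up[of j] Suc by simp
    thus ?case by (simp add: numeral_eq_Suc)
  qed
  have Q: "cycle_of_list [1, 2, k] \<in> H" if "3 \<le> k" "k \<le> p" for k
    using that
  proof (induction k rule: nat_induct_at_least)
    case base thus ?case using c123 by simp
  next
    case (Suc k)
    have IH: "cycle_of_list [1, 2, k] \<in> H" using Suc by simp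
    show ?case
    proof (cases "k = 3")
      case True
      have "p \<ge> 5" using Suc True p4 by simp
      hence t: "cycle_of_list [3, 4, 5] \<in> H" using tau[of 3] by simp
      have "map (cycle_of_list [3, 4, 5]) [1, 2, k] = [1, 2, Suc k]"
        using True by (simp add: cyc3_apply del: cycle_of_list.simps)
      thus ?thesis using Hc[OF t _ IH] True by simp
    next
      case False
      hence k4: "k \<ge> 4" using Suc by simp
      have t: "cycle_of_list [k - 1, k, k + 1] \<in> H"
        using tau[of "k - 1"] Suc k4 by (simp add: Suc_diff_le)
      have d: "distinct [k - 1, k, k + 1]" using k4 by auto
      have "map (cycle_of_list [k - 1, k, k + 1]) [1, 2, k] = [1, 2, Suc k]"
        using k4 unfolding list.map cyc3_apply[OF d] by auto
      thus ?thesis using Hc[OF t _ IH] k4 by simp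
    qed
  qed
  have L1: "cycle_of_list [1, x, y] \<in> H" if "distinct [1, x, y]" "x \<in> {1..p}" "y \<in> {1..p}" for x y
  proof -
    have sqx: "cycle_of_list [1, x, 2] \<in> H" if "x \<noteq> 2" "x \<noteq> 1" "x \<in> {1..p}" for x
    proof -
      have x3: "3 \<le> x" "x \<le> p" using that by auto
      have "cycle_of_list [1, x, 2] = cycle_of_list [1, 2, x] \<circ> cycle_of_list [1, 2, x]"
        using sq3[of 1 2 x] that by simp
      thus ?thesis using Hm[OF Q[OF x3] Q[OF x3]] by simp
    qed
    consider "x = 2" | "y = 2" | "x \<noteq> 2 \<and> y \<noteq> 2" by blast
    thus ?thesis
    proof cases
      case 1
      have "3 \<le> y" "y \<le> p" using that 1 by auto
      thus ?thesis using Q[of y] 1 by simp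
    next
      case 2
      thus ?thesis using sqx[of x] that by simp
    next
      case 3
      have y3: "3 \<le> y" "y \<le> p" using that 3 by auto
      have "cycle_of_list [1, x, y] = cycle_of_list [1, 2, y] \<circ> cycle_of_list [1, x, 2]"
        using P1[of 1 2 x y] that 3 by simp
      moreover have "cycle_of_list [1, x, 2] \<in> H" using sqx[of x] that 3 by simp
      ultimately show ?thesis using Hm[OF Q[OF y3]] by simp
    qed
  qed
  consider "a = 1" | "b = 1" | "c = 1" | "1 \<notin> {a,b,c}" by blast
  thus ?thesis
  proof cases
    case 1 thus ?thesis using L1[of b c] abc by simp
  next
    case 2
    have "cycle_of_list [a,b,c] = cycle_of_list [b,c,a]" using rot3[OF abc(1)] .
    thus ?thesis using L1[of c a] abc 2 by simp
  next
    case 3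
    have "cycle_of_list [a,b,c] = cycle_of_list [b,c,a]" using rot3[OF abc(1)] .
    also have "\<dots> = cycle_of_list [c,a,b]" by (rule rot3) (use abc(1) in auto)
    finally show ?thesis using L1[of a b] abc 3 by simp
  next
    case 4
    have "cycle_of_list [a,b,c] = cycle_of_list [1,a,b] \<circ> cycle_of_list [1,b,c]"
      using P2[of 1 a b c] abc 4 by simp
    moreover have "cycle_of_list [1,a,b] \<in> H" using L1[of a b] abc 4 by simp
    moreover have "cycle_of_list [1,b,c] \<in> H" using L1[of b c] abc 4 by simp
    ultimately show ?thesis using Hm by simp
  qed
qed


lemma not_prime_468: "\<not> prime (4::nat)" "\<not> prime (6::nat)" "\<not> prime (8::nat)"
  using prime_product[of "2::nat" 2] prime_product[of "2::nat" 3] prime_product[of "2::nat" 4] by auto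

lemma prime_cases: "prime (p::nat) \<Longrightarrow> p = 2 \<or> p = 3 \<or> p = 5 \<or> p = 7 \<or> p \<ge> 9"
proof -
  assume p: "prime p"
  hence "p \<ge> 2" by (simp add: prime_ge_2_nat)
  moreover have "p \<noteq> 4" "p \<noteq> 6" "p \<noteq> 8" using p not_prime_468 by auto
  ultimately show ?thesis by linarith
qed

lemma comp_in:
  assumes G: "G = sym_group p \<or> G = alt_group p"
    and "f permutes {1..p}" "g permutes {1..p}" "evenperm f = evenperm g"
  shows "f \<circ> g \<in> carrier G"
proof -
  have "permutation f" "permutation g" using assms by (meson finite_atLeastAtMost permutation_permutes)+
  moreover have "f \<circ> g permutes {1..p}" using permutes_compose[OF assms(3) assms(2)] .
  ultimately show ?thesis using G_facts(6)[OF G] assms(4) by (simp add: evenperm_comp)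
qed

lemma main_std:
  assumes p: "prime p" and G: "G = sym_group p \<or> G = alt_group p" and s: "scyc p \<in> carrier G"
  shows "killing_irreducible G (conj_class G (scyc p))"
proof -
  interpret group G using G_facts(1)[OF G] .
  let ?s = "scyc p"
  let ?H = "Hst ?s"
  have mult: "\<And>a b. a \<otimes>\<^bsub>G\<^esub> b = a \<circ> b" using G_facts(2)[OF G] by simp
  have invG: "\<And>g. g \<in> carrier G \<Longrightarrow> inv\<^bsub>G\<^esub> g = inv' g" using G_facts(4)[OF G] by simp
  have Hc: "\<And>g. g \<in> ?H \<Longrightarrow> g \<in> carrier G" unfolding Hst_def by auto
  have Hm: "\<And>g h. g \<in> ?H \<Longrightarrow> h \<in> ?H \<Longrightarrow> g \<circ> h \<in> ?H" using Hst_mult[OF s] mult by metis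
  have Hi: "\<And>g. g \<in> ?H \<Longrightarrow> inv' g \<in> ?H" using Hst_inv[OF s] invG Hc by metis
  have Hs: "?s \<in> ?H" unfolding Hst_def using s by (simp add: m_assoc)
  have sp: "?s permutes {1..p}" by (rule scyc_permutes)
  have pc: "p = 2 \<or> p = 3 \<or> p = 5 \<or> p = 7 \<or> p \<ge> 9" using prime_cases[OF p] .
  have Hconj: "cycle_of_list (map h cs) \<in> ?H"
    if h: "h \<in> ?H" and cs: "distinct cs" and c: "cycle_of_list cs \<in> ?H" for h cs
  proof -
    have hp: "h permutes {1..p}" using G_facts(5)[OF G] Hc[OF h] by simp
    have "h \<circ> cycle_of_list cs \<circ> inv' h = cycle_of_list (map h cs)"
      using conjugation_of_cycle[OF cs permutes_bij[OF hp]] .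
    moreover have "h \<circ> cycle_of_list cs \<circ> inv' h \<in> ?H" using Hm[OF Hm[OF h c] Hi[OF h]] .
    ultimately show ?thesis by simp
  qed
  have s_val: "\<And>j. 1 \<le> j \<Longrightarrow> j < p \<Longrightarrow> ?s j = Suc j" by (simp add: scyc_def)
  have sinv_val: "\<And>j. 1 \<le> j \<Longrightarrow> j < p \<Longrightarrow> inv' ?s (Suc j) = j"
    using s_val permutes_inv_eq[OF sp] by blast
  have up: "cycle_of_list [i+1, i+2, i+3] \<in> ?H"
    if "1 \<le> i" "i + 3 \<le> p" "cycle_of_list [i, i+1, i+2] \<in> ?H" for i
  proof -
    have "map ?s [i, i+1, i+2] = [i+1, i+2, i+3]" using s_val that by simp
    thus ?thesis using Hconj[OF Hs _ that(3)] by simp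
  qed
  have down: "cycle_of_list [i, i+1, i+2] \<in> ?H"
    if "1 \<le> i" "i + 3 \<le> p" "cycle_of_list [i+1, i+2, i+3] \<in> ?H" for i
  proof -
    have "map (inv' ?s) [i+1, i+2, i+3] = [i, i+1, i+2]" using sinv_val that
      by (simp add: numeral_eq_Suc)
    thus ?thesis using Hconj[OF Hi[OF Hs] _ that(3)] by simp
  qed
  have down': "cycle_of_list [a, b, c] \<in> ?H"
    if "1 \<le> a" "a + 3 \<le> p" "b = a + 1" "c = a + 2" "d = a + 3" "cycle_of_list [b, c, d] \<in> ?H" for a b c d
    using down[of a] that by simp
  have c123: "cycle_of_list [1,2,3] \<in> ?H" if p3: "p \<ge> 3"
  proof -
    consider "p = 3" | "p = 5" | "p = 7 \<or> p \<ge> 9" using pc p3 by force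
    thus ?thesis
    proof cases
      case 1 thus ?thesis using Hs S3 by simp
    next
      case 2
      have u5: "u5 \<in> carrier G"
        using comp_in[OF G] cyc_permutes[of "[2,3]" p] cyc_permutes[of "[4,5]" p] cyc_even[of "[2,3::nat]"]
          cyc_even[of "[4,5::nat]"] 2 by simp
      have k5: "k5 \<in> carrier G" using cyc3_in[OF G] 2 by simp
      have eq5: "u5 \<circ> scyc p \<circ> k5 \<circ> scyc p = scyc p \<circ> u5 \<circ> k5" using I5 2 by simp
      have k5H: "k5 \<in> ?H" using direct_perm[OF G s k5 u5 V5 eq5 refl] .
      have "cycle_of_list [2,3,4] \<in> ?H"
        apply (rule down'[of 2 3 4 5])
        using 2 k5H by simp_all
      show ?thesis
        apply (rule down'[of 1 2 3 4])
        using 2 \<open>cycle_of_list [2,3,4] \<in> ?H\<close> by simp_all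
    next
      case 3
      have p7: "p \<ge> 7" using 3 by auto
      have u1c: "u1 \<in> carrier G" using cyc3_in[OF G] p7 by simp
      have k1c: "k1 \<in> carrier G"
        using comp_in[OF G] cyc_permutes[of "[4,6,1]" p] cyc_permutes[of "[5,7,2]" p] cyc_even[of "[4,6,1::nat]"]
          cyc_even[of "[5,7,2::nat]"] p7 by simp
      have u2c: "u2 \<in> carrier G"
        using comp_in[OF G] cyc_permutes[of "[2,7]" p] cyc_permutes[of "[3,5]" p] cyc_even[of "[2,7::nat]"]
          cyc_even[of "[3,5::nat]"] p7 by simp
      have k2c: "k2 \<in> carrier G"
        using comp_in[OF G] cyc_permutes[of "[4,1,6,5]" p] cyc_permutes[of "[7,2]" p] cyc_even[of "[4,1,6,5::nat]"]
          cyc_even[of "[7,2::nat]"] p7 by simp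
      have ws: "scyc p \<circ> (scyc p \<circ> scyc p) = (scyc p \<circ> scyc p) \<circ> scyc p" by (simp add: comp_assoc)
      have eq1: "v1 \<circ> scyc p \<circ> k1 \<circ> scyc p = scyc p \<circ> scyc p \<circ> v1 \<circ> k1"
        using 3 I1[of p] I1_7 by auto
      have eq2: "u2 \<circ> scyc p \<circ> k2 \<circ> scyc p = scyc p \<circ> scyc p \<circ> u2 \<circ> k2"
        using 3 I2[of p] I2_7 by auto
      have k1H: "k1 \<in> ?H" using direct_perm[OF G s k1c u1c V1 eq1 ws] .
      have k2H: "k2 \<in> ?H" using direct_perm[OF G s k2c u2c V2 eq2 ws] .
      have h567: "cycle_of_list [5,6,7] \<in> ?H" using Hm[OF k1H k2H] I3 by simp
      have "cycle_of_list [4,5,6] \<in> ?H"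
        apply (rule down'[of 4 5 6 7]) using p7 h567 by simp_all
      hence "cycle_of_list [3,4,5] \<in> ?H"
        apply - apply (rule down'[of 3 4 5 6]) using p7 by simp_all
      hence "cycle_of_list [2,3,4] \<in> ?H"
        apply - apply (rule down'[of 2 3 4 5]) using p7 by simp_all
      thus ?thesis
        apply - apply (rule down'[of 1 2 3 4]) using p7 by simp_all
    qed
  qed
  have three: "c \<in> ?H" if c: "c \<in> three_cycles p" for c
  proof -
    obtain cs where cs: "c = cycle_of_list cs" "distinct cs" "length cs = 3" "set cs \<subseteq> {1..p}"
      using c by blast
    obtain a b d where abd: "cs = [a, b, d]" using stupid_lemma[OF cs(3)] by blast
    have "card (set cs) = 3" using cs distinct_card by metis
    moreover have "card (set cs) \<le> card {1..p}" using cs(4) card_mono[of "{1..p}" "set cs"] by simp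
    ultimately have p3: "p \<ge> 3" by simp
    have p4: "p \<noteq> 4" using p not_prime_468 by auto
    have "cycle_of_list [a, b, d] \<in> ?H"
      by (rule gen3[where p = p, OF Hm Hconj c123[OF p3] up p4]) (use cs abd in auto)
    thus ?thesis using cs abd by simp
  qed
  have altH: "g \<in> ?H" if g: "g \<in> carrier (alt_group p)" for g
  proof -
    have "g \<in> generate (alt_group p) (three_cycles p)" using g alt_group_carrier_as_three_cycles by blast
    thus ?thesis
    proof (induction rule: generate.induct)
      case one
      have "\<one>\<^bsub>G\<^esub> \<in> ?H" using Hst_one[OF s] .
      thus ?case using G_facts(3)[OF G] alt_group_one by metis
    next
      case (incl h) thus ?case using three by blast
    next
      case (inv h)
      have "h \<in> carrier (alt_group p)" using inv three_cycles_incl by blast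
      hence "inv\<^bsub>alt_group p\<^esub> h = inv' h" by (rule alt_group_inv_equality)
      thus ?case using Hi three[OF inv] by simp
    next
      case (eng h1 h2) thus ?case using Hm[OF eng.IH] alt_group_mult by metis
    qed
  qed
  have oddH: "\<exists>k. k \<in> ?H \<and> \<not> evenperm k \<and> k permutes {1..p}" if Gs: "G = sym_group p"
  proof -
    have inG: "\<And>g. g permutes {1..p} \<Longrightarrow> g \<in> carrier G" using Gs sym_group_carrier by simp
    consider "p = 2" | "p = 3" | "p = 5 \<or> p = 7 \<or> p \<ge> 9" using pc by blast
    thus ?thesis
    proof cases
      case 1
      have "\<not> evenperm (scyc p)" using 1 S2 cyc_even[of "[1,2::nat]"] by simp
      thus ?thesis using Hs sp by blast
    next
      case 2
      have tp: "cycle_of_list [1,2] permutes {1..p}" using cyc_permutes[of "[1,2]" p] 2 by simp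
      have idc: "id \<in> carrier G" using inG permutes_id by blast
      have eq: "id \<circ> scyc p \<circ> cycle_of_list [1,2] \<circ> scyc p = id \<circ> id \<circ> cycle_of_list [1,2]"
        using I6 2 by simp
      have "cycle_of_list [1,2] \<in> ?H"
        using direct_perm[OF G s inG[OF tp] idc _ eq] by simp
      moreover have "\<not> evenperm (cycle_of_list [1,2::nat])" using cyc_even[of "[1,2::nat]"] by simp
      ultimately show ?thesis using tp by blast
    next
      case 3
      have p5: "p \<ge> 5" using 3 by auto
      have kp: "k0 permutes {1..p}" using cyc_permutes[of "[1,4,5,2]" p] p5 by simp
      have u0c: "u0 \<in> carrier G"
        using comp_in[OF G] cyc_permutes[of "[2,5]" p] cyc_permutes[of "[3,4]" p] cyc_even[of "[2,5::nat]"]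
          cyc_even[of "[3,4::nat]"] p5 by simp
      have ws: "scyc p \<circ> (scyc p \<circ> scyc p) = (scyc p \<circ> scyc p) \<circ> scyc p" by (simp add: comp_assoc)
      have eq0: "u0 \<circ> scyc p \<circ> k0 \<circ> scyc p = scyc p \<circ> scyc p \<circ> u0 \<circ> k0"
        using 3 I4[of p] I4_7 I4_5 by auto
      have "k0 \<in> ?H" using direct_perm[OF G s inG[OF kp] u0c V0 eq0 ws] .
      moreover have "\<not> evenperm k0" using cyc_even[of "[1,4,5,2::nat]"] by simp
      ultimately show ?thesis using kp by blast
    qed
  qed
  have "carrier G \<subseteq> ?H"
  proof
    fix g assume g: "g \<in> carrier G"
    have gp: "g permutes {1..p}" using G_facts(5)[OF G] g by simp
    show "g \<in> ?H"
    proof (cases "evenperm g")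
      case True
      thus ?thesis using altH gp alt_group_carrier by blast
    next
      case False
      hence Gs: "G = sym_group p" using G g alt_group_carrier by auto
      obtain k where k: "k \<in> ?H" "\<not> evenperm k" "k permutes {1..p}" using oddH[OF Gs] by blast
      have pk: "permutation k" "permutation g" using k(3) gp by (meson finite_atLeastAtMost permutation_permutes)+
      have "inv' k \<circ> g permutes {1..p}" using permutes_compose[OF gp permutes_inv[OF k(3)]] .
      moreover have "evenperm (inv' k \<circ> g)"
        using False k(2) pk by (simp add: evenperm_comp evenperm_inv permutation_inverse)
      ultimately have "inv' k \<circ> g \<in> ?H" using altH alt_group_carrier by blast
      hence "k \<circ> (inv' k \<circ> g) \<in> ?H" using Hm[OF k(1)] by blast
      moreover have "k \<circ> (inv' k \<circ> g) = g" using permutes_inv_o[OF k(3)] by (simp add: comp_assoc[symmetric])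
      ultimately show ?thesis by simp
    qed
  qed
  thus ?thesis using Hst_all[OF s] by blast
qed


lemma conj_in:
  assumes G: "G = sym_group p \<or> G = alt_group p" and g: "g \<in> carrier G" and \<sigma>: "\<sigma> permutes {1..p}"
  shows "\<sigma> \<circ> g \<circ> inv' \<sigma> \<in> carrier G"
proof -
  have gp: "g permutes {1..p}" using G_facts(5)[OF G] g by simp
  have ip: "inv' \<sigma> permutes {1..p}" using permutes_inv[OF \<sigma>] .
  have perm: "\<sigma> \<circ> g \<circ> inv' \<sigma> permutes {1..p}"
    using permutes_compose[OF ip permutes_compose[OF gp \<sigma>]] .
  have pm: "permutation \<sigma>" "permutation g" "permutation (inv' \<sigma>)"
    using \<sigma> gp ip by (meson finite_atLeastAtMost permutation_permutes)+
  have ev: "evenperm (\<sigma> \<circ> g \<circ> inv' \<sigma>) = evenperm g"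
    using pm by (simp add: evenperm_comp evenperm_inv permutation_compose) blast
  show ?thesis
    using G g perm ev sym_group_carrier alt_group_carrier by auto
qed

theorem lemma7p5:
  fixes p :: nat and G :: "(nat \<Rightarrow> nat) monoid" and x :: "nat \<Rightarrow> nat"
  assumes "prime p"
    and "G = sym_group p \<or> G = alt_group p"
    and "x \<in> carrier G"
    and "group.ord G x = p"
  shows "killing_irreducible G (conj_class G x)"
proof -
  note p = assms(1) and G = assms(2) and x = assms(3) and ord = assms(4)
  interpret group G using G_facts(1)[OF G] .
  have fin: "finite (carrier G)"
  proof -
    have "carrier G \<subseteq> {\<sigma>. \<sigma> permutes {1..p}}" using G_facts(5)[OF G] by blast
    thus ?thesis using finite_permutations[of "{1..p}"] finite_subset by blast
  qed
  have pow: "x [^]\<^bsub>G\<^esub> (n::nat) = x ^^ n" for n using G sym_pow alt_pow by auto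
  have xp: "x ^^ p = id" using pow_ord_eq_1[OF x] ord pow G_facts(3)[OF G] by simp
  have xid: "x \<noteq> id"
  proof
    assume "x = id"
    hence "x = \<one>\<^bsub>G\<^esub>" using G_facts(3)[OF G] by simp
    hence "group.ord G x = 1" by simp
    thus False using ord p by (simp add: prime_gt_1_nat less_irrefl_nat)
  qed
  have xperm: "x permutes {1..p}" using G_facts(5)[OF G] x by simp
  obtain \<sigma> where \<sigma>: "\<sigma> permutes {1..p}" and xs: "x = \<sigma> \<circ> scyc p \<circ> inv' \<sigma>"
    using relabel[OF p xperm xp xid] by blast
  have ip: "inv' \<sigma> permutes {1..p}" using permutes_inv[OF \<sigma>] .
  have iis: "inv' (inv' \<sigma>) = \<sigma>" using \<sigma> by (simp add: inv_inv_eq permutes_bij)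
  have io: "\<sigma> \<circ> inv' \<sigma> = id" "inv' \<sigma> \<circ> \<sigma> = id" using permutes_inv_o[OF \<sigma>] by auto
  define \<phi> where "\<phi> g = \<sigma> \<circ> g \<circ> inv' \<sigma>" for g
  define \<psi> where "\<psi> g = inv' \<sigma> \<circ> g \<circ> \<sigma>" for g
  have \<phi>c: "\<phi> g \<in> carrier G" if "g \<in> carrier G" for g
    unfolding \<phi>_def using conj_in[OF G that \<sigma>] .
  have \<psi>c: "\<psi> g \<in> carrier G" if "g \<in> carrier G" for g
    unfolding \<psi>_def using conj_in[OF G that ip] iis by simp
  have \<phi>\<psi>: "\<phi> (\<psi> g) = g" for g
  proof -
    have "\<phi> (\<psi> g) = (\<sigma> \<circ> inv' \<sigma>) \<circ> g \<circ> (\<sigma> \<circ> inv' \<sigma>)"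
      unfolding \<phi>_def \<psi>_def by (simp add: comp_assoc)
    thus ?thesis using io by simp
  qed
  have \<psi>\<phi>: "\<psi> (\<phi> g) = g" for g
  proof -
    have "\<psi> (\<phi> g) = (inv' \<sigma> \<circ> \<sigma>) \<circ> g \<circ> (inv' \<sigma> \<circ> \<sigma>)"
      unfolding \<phi>_def \<psi>_def by (simp add: comp_assoc)
    thus ?thesis using io by simp
  qed
  have s: "scyc p \<in> carrier G"
  proof -
    have "\<psi> x = scyc p" using \<psi>\<phi>[of "scyc p"] xs unfolding \<phi>_def by simp
    thus ?thesis using \<psi>c[OF x] by simp
  qed
  have irr: "killing_irreducible G (conj_class G (scyc p))" using main_std[OF p G s] .
  have hom: "\<phi> \<in> hom G G"
  proof (rule homI)
    fix a b assume "a \<in> carrier G" "b \<in> carrier G"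
    have "\<phi> (a \<circ> b) = \<sigma> \<circ> a \<circ> (inv' \<sigma> \<circ> \<sigma>) \<circ> b \<circ> inv' \<sigma>"
      unfolding \<phi>_def using io by (simp add: comp_assoc)
    also have "\<dots> = \<phi> a \<circ> \<phi> b" unfolding \<phi>_def by (simp add: comp_assoc)
    finally show "\<phi> (a \<otimes>\<^bsub>G\<^esub> b) = \<phi> a \<otimes>\<^bsub>G\<^esub> \<phi> b" using G_facts(2)[OF G] by simp
  qed (rule \<phi>c)
  have bij: "bij_betw \<phi> (carrier G) (carrier G)"
    by (rule bij_betw_byWitness[where f' = \<psi>]) (use \<phi>\<psi> \<psi>\<phi> \<phi>c \<psi>c in auto)
  have "\<phi> (scyc p) = x" unfolding \<phi>_def using xs by simp
  thus ?thesis using transport_irreducible[OF s hom bij irr] by simp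
qed

end
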